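(* Let $K$ be a field of characteristic $p>0$ and $A^*$ a graded Hopf algebra over $K$ with a decreasing filtration satisfying (E1), (E2), (E3), (E4), (E6), (E7), (E8), and let $M^*$ be an unstable $A^*$-module. Then: (1) $\Sigma^{-1}\operatorname{Coker}\lambda_{M^*}$ is an unstable $A^*$-module; (2) if moreover the filtration satisfies (E9), then $\Sigma^{-1}\operatorname{Ker}\lambda_{M^*}$ is an unstable $A^*$-module.
   Context: Let $A^*$ be a graded Hopf algebra over a field $K$ of characteristic $p$, with product $\mu$ and a decreasing filtration $(F_iA^* )_{i\in\mathbb Z}$ by graded subspaces; $E_i^jA^*=(F_iA^* )^j/(F_{i+1}A^* )^j$. A left $A^*$-module $M^*$ with structure map $\alpha$ is unstable if $\alpha(F_{n+1}A^*\otimes M^n)=0$ for all $n$; then $\alpha$ induces $\bar\alpha_{M,n}\colon A^*/F_{n+1}A^*\otimes M^n\to M^*$. $(\Sigma^nV^* )^i=V^{i-n}$. Conditions: (E1) $F_iA^*=A^*$ for $i\le0$; (E2) $\bigcap_iF_iA^*=0$; (E3) each $F_iA^*$ is a left ideal; (E4) $\mu(F_iA^*\otimes A^j)\subset F_{i-j}A^*$; (E6) $E_{2i+\varepsilon}^kA^*=0$ if $k<2i(p-1)+\varepsilon$ or $2i+\varepsilon+k\not\equiv0,2\pmod{2p}$ ($i,k\in\mathbb Z$, $\varepsilon\in\{0,1\}$); (E7) $\dim E_{2i+\varepsilon}^{2i(p-1)+\varepsilon}A^*=1$ for $i\ge0$; (E8) for $i,j\ge0$, $\varepsilon\in\{0,1\}$,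 the map $\tilde\mu_{2i+\varepsilon}^{2i(p-1)+\varepsilon,j}\colon E_{2i+\varepsilon}^{2i(p-1)+\varepsilon}A^*\otimes(A^*/F_{2i-j+\varepsilon+1}A^* )^j\to E_{2i-j+\varepsilon}^{2i(p-1)+j+\varepsilon}A^*$, $[a]\otimes[b]\mapsto[ab]$, is an isomorphism. For $i,j\ge0$, $\varepsilon\in\{0,1\}$ put $\kappa=\varepsilon$ if $j$ is even and $\kappa=1-\varepsilon$ if $j$ is odd, and let $\gamma_{i,j,\varepsilon}$ be the composite of the map $A^{pj-(p-2)(\varepsilon-\kappa)}\otimes E_{2i-j+\varepsilon}^{(2i-j+\varepsilon-\kappa)(p-1)+\kappa}A^*\to E_{2i-j+\varepsilon}^{2i(p-1)+j+\varepsilon}A^*$ induced by left multiplication with $(\tilde\mu_{2i+\varepsilon}^{2i(p-1)+\varepsilon,j})^{-1}$. (E9): for every $k$, $\gamma_{i,j,\varepsilon}$ maps $(F_kA^* )^{pj-(p-2)(\varepsilon-\kappa)}\otimes E_{2i-j+\varepsilon}^{(2i-j+\varepsilon-\kappa)(p-1)+\kappa}A^*$ into $E_{2i+\varepsilon}^{2i(p-1)+\varepsilon}A^*\otimes(F_{\lceil k/p\rceil}A^*/F_{2i-j+\varepsilon+1}A^* )^j$. The module $\Phi M^*$: as a graded vector space $(\Phi M^* )^{2ip+2\varepsilon}=E_{2i+\varepsilon}^{2i(p-1)+\varepsilon}A^*\otimes M^{2i+\varepsilon}$ and $(\Phi M^* )^k=0$ for $k\not\equiv0,2\pmod{2p}$;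 the $A^*$-action is given on homogeneous pieces by: $A^{2jp}\otimes E_{2i+\varepsilon}^{2i(p-1)+\varepsilon}A^*\otimes M^{2i+\varepsilon}\to E_{2(i+j)+\varepsilon}^{2(i+j)(p-1)+\varepsilon}A^*\otimes M^{2(i+j)+\varepsilon}$ equal to $(1\otimes\bar\alpha_{M,2i+\varepsilon})\circ(\gamma_{i+j,2j,\varepsilon}\otimes1)$; $A^{2jp+2}\otimes E_{2i}^{2i(p-1)}A^*\otimes M^{2i}\to E_{2(i+j)+1}^{2(i+j)(p-1)+1}A^*\otimes M^{2(i+j)+1}$ equal to $(1\otimes\bar\alpha_{M,2i})\circ(\gamma_{i+j,2j+1,1}\otimes1)$; $A^{2jp-2}\otimes E_{2i+1}^{2i(p-1)+1}A^*\otimes M^{2i+1}\to E_{2(i+j)}^{2(i+j)(p-1)}A^*\otimes M^{2(i+j)}$ equal to $(1\otimes\bar\alpha_{M,2i+1})\circ(\gamma_{i+j,2j-1,0}\otimes1)$; all other components are zero. $\lambda_M\colon\Phi M^*\to M^*$ is given by $[a]\otimes x\mapsto ax$ on $E_{2i+\varepsilon}^{2i(p-1)+\varepsilon}A^*\otimes M^{2i+\varepsilon}$; it is a homomorphism of $A^*$-modules, so its kernel and cokernel are $A^*$-modules. *)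

theory Defs
  imports Complex_Main "HOL-Computational_Algebra.Primes"
begin

text \<open>A graded vector space over the field 'k is given by its homogeneous components
  V n (n :: int), which are subspaces of an ambient K-vector space whose sum is direct.\<close>

definition graded_vs :: "('k::field \<Rightarrow> 'v::ab_group_add \<Rightarrow> 'v) \<Rightarrow> (int \<Rightarrow> 'v set) \<Rightarrow> bool" where
  "graded_vs sc V \<longleftrightarrow> vector_space sc \<and> (\<forall>n. module.subspace sc (V n)) \<and>
     (\<forall>S f. finite S \<longrightarrow> (\<forall>n\<in>S. f n \<in> V n) \<longrightarrow> sum f S = 0 \<longrightarrow> (\<forall>n\<in>S. f n = 0))"

text \<open>Graded (associative, unital) K-algebra A with product (*), components Ad, together with a
  decreasing filtration by graded subspaces: F i j = (F_i A)^j.\<close>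

definition filtered_graded_algebra ::
  "('k::field \<Rightarrow> 'a::ring_1 \<Rightarrow> 'a) \<Rightarrow> (int \<Rightarrow> 'a set) \<Rightarrow> (int \<Rightarrow> int \<Rightarrow> 'a set) \<Rightarrow> bool" where
  "filtered_graded_algebra sc Ad F \<longleftrightarrow>
     graded_vs sc Ad \<and>
     (\<forall>t a b. sc t (a * b) = sc t a * b \<and> a * sc t b = sc t (a * b)) \<and>
     1 \<in> Ad 0 \<and>
     (\<forall>i j a b. a \<in> Ad i \<longrightarrow> b \<in> Ad j \<longrightarrow> a * b \<in> Ad (i + j)) \<and>
     (\<forall>i j. module.subspace sc (F i j) \<and> F i j \<subseteq> Ad j \<and> F (i + 1) j \<subseteq> F i j)"

definition E1 :: "(int \<Rightarrow> 'a set) \<Rightarrow> (int \<Rightarrow> int \<Rightarrow> 'a set) \<Rightarrow> bool" where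
  "E1 Ad F \<longleftrightarrow> (\<forall>i j. i \<le> 0 \<longrightarrow> F i j = Ad j)"

definition E2 :: "(int \<Rightarrow> int \<Rightarrow> 'a::zero set) \<Rightarrow> bool" where
  "E2 F \<longleftrightarrow> (\<forall>j. (\<Inter>i. F i j) = {0})"

definition E3 :: "(int \<Rightarrow> 'a::times set) \<Rightarrow> (int \<Rightarrow> int \<Rightarrow> 'a set) \<Rightarrow> bool" where
  "E3 Ad F \<longleftrightarrow> (\<forall>i j k a b. a \<in> Ad k \<longrightarrow> b \<in> F i j \<longrightarrow> a * b \<in> F i (k + j))"

definition E4 :: "(int \<Rightarrow> 'a::times set) \<Rightarrow> (int \<Rightarrow> int \<Rightarrow> 'a set) \<Rightarrow> bool" where
  "E4 Ad F \<longleftrightarrow> (\<forall>i j k a b. a \<in> F i k \<longrightarrow> b \<in> Ad j \<longrightarrow> a * b \<in> F (i - j) (k + j))"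

text \<open>E_i^k A = 0 means (F_i A)^k \<subseteq> (F_{i+1} A)^k.\<close>

definition E6 :: "nat \<Rightarrow> (int \<Rightarrow> int \<Rightarrow> 'a set) \<Rightarrow> bool" where
  "E6 p F \<longleftrightarrow> (\<forall>i k \<epsilon>::int. \<epsilon> \<in> {0, 1} \<longrightarrow>
      (k < 2 * i * (int p - 1) + \<epsilon> \<or> (2 * i + \<epsilon> + k) mod (2 * int p) \<notin> {0, 2}) \<longrightarrow>
      F (2 * i + \<epsilon>) k \<subseteq> F (2 * i + \<epsilon> + 1) k)"

text \<open>The degree 2i(p-1)+\<epsilon> of the distinguished one-dimensional piece.\<close>

definition gdeg :: "nat \<Rightarrow> int \<Rightarrow> int \<Rightarrow> int" where
  "gdeg p i \<epsilon> = 2 * i * (int p - 1) + \<epsilon>"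

text \<open>(E7): dim E_{2i+\<epsilon>}^{2i(p-1)+\<epsilon>} A = 1, written out for the quotient
  F_{2i+\<epsilon>}/F_{2i+\<epsilon>+1} in that degree: it has an element with nonzero class, and
  every class is a scalar multiple of it.\<close>

definition E7 :: "('k::field \<Rightarrow> 'a::ab_group_add \<Rightarrow> 'a) \<Rightarrow> nat \<Rightarrow> (int \<Rightarrow> int \<Rightarrow> 'a set) \<Rightarrow> bool" where
  "E7 sc p F \<longleftrightarrow> (\<forall>i \<epsilon>::int. 0 \<le> i \<longrightarrow> \<epsilon> \<in> {0, 1} \<longrightarrow>
      (\<exists>a \<in> F (2 * i + \<epsilon>) (gdeg p i \<epsilon>). a \<notin> F (2 * i + \<epsilon> + 1) (gdeg p i \<epsilon>) \<and>
         (\<forall>c \<in> F (2 * i + \<epsilon>) (gdeg p i \<epsilon>). \<exists>t. c - sc t a \<in> F (2 * i + \<epsilon> + 1) (gdeg p i \<epsilon>))))"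

text \<open>(E8): the map E_{2i+\<epsilon>}^{2i(p-1)+\<epsilon>} \<otimes> (A/F_{2i-j+\<epsilon>+1})^j \<rightarrow> E_{2i-j+\<epsilon>}^{2i(p-1)+j+\<epsilon>},
  [a]\<otimes>[b] \<mapsto> [ab], is an isomorphism. Since the first factor is one-dimensional (E7), this
  says: for a representative a of a nonzero class, [b] \<mapsto> [ab] is bijective
  (A/F_{2i-j+\<epsilon>+1})^j \<rightarrow> E_{2i-j+\<epsilon>}^{2i(p-1)+j+\<epsilon>} (it is well defined and linear by (E3)).\<close>

definition E8 :: "nat \<Rightarrow> (int \<Rightarrow> 'a::ring set) \<Rightarrow> (int \<Rightarrow> int \<Rightarrow> 'a set) \<Rightarrow> bool" where
  "E8 p Ad F \<longleftrightarrow> (\<forall>i j \<epsilon>::int. 0 \<le> i \<longrightarrow> 0 \<le> j \<longrightarrow> \<epsilon> \<in> {0, 1} \<longrightarrow>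
      (\<forall>a \<in> F (2 * i + \<epsilon>) (gdeg p i \<epsilon>). a \<notin> F (2 * i + \<epsilon> + 1) (gdeg p i \<epsilon>) \<longrightarrow>
        (\<forall>b \<in> Ad j. a * b \<in> F (2 * i - j + \<epsilon> + 1) (gdeg p i \<epsilon> + j) \<longrightarrow> b \<in> F (2 * i - j + \<epsilon> + 1) j) \<and>
        (\<forall>c \<in> F (2 * i - j + \<epsilon>) (gdeg p i \<epsilon> + j).
           \<exists>b \<in> Ad j. c - a * b \<in> F (2 * i - j + \<epsilon> + 1) (gdeg p i \<epsilon> + j))))"

text \<open>(E9): \<gamma>_{i,j,\<epsilon>}(a \<otimes> [c]) = [u] \<otimes> [b] where ac \<equiv> ub mod F_{2i-j+\<epsilon>+1} (u a representative of
  a basis of E_{2i+\<epsilon>}^{2i(p-1)+\<epsilon>}); the condition is that [b] lies in the image of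
  F_{\<lceil>k/p\<rceil>}A in (A/F_{2i-j+\<epsilon>+1})^j whenever a \<in> F_k A.\<close>

definition kappa :: "int \<Rightarrow> int \<Rightarrow> int" where
  "kappa j \<epsilon> = (if even j then \<epsilon> else 1 - \<epsilon>)"

definition E9 :: "nat \<Rightarrow> (int \<Rightarrow> 'a::ring set) \<Rightarrow> (int \<Rightarrow> int \<Rightarrow> 'a set) \<Rightarrow> bool" where
  "E9 p Ad F \<longleftrightarrow> (\<forall>i j \<epsilon> k::int. 0 \<le> i \<longrightarrow> 0 \<le> j \<longrightarrow> \<epsilon> \<in> {0, 1} \<longrightarrow>
      (let \<kappa> = kappa j \<epsilon>;
           d1 = int p * j - (int p - 2) * (\<epsilon> - \<kappa>);
           d2 = (2 * i - j + \<epsilon> - \<kappa>) * (int p - 1) + \<kappa>;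
           m = 2 * i - j + \<epsilon> + 1
       in \<forall>a \<in> F k d1. \<forall>c \<in> F (m - 1) d2.
            \<forall>u \<in> F (2 * i + \<epsilon>) (gdeg p i \<epsilon>). u \<notin> F (2 * i + \<epsilon> + 1) (gdeg p i \<epsilon>) \<longrightarrow>
            (\<forall>b \<in> Ad j. a * c - u * b \<in> F m (gdeg p i \<epsilon> + j) \<longrightarrow>
               (\<exists>b' \<in> F \<lceil>real_of_int k / real p\<rceil> j. b - b' \<in> F m j))))"

definition graded_module ::
  "('k::field \<Rightarrow> 'a::ring_1 \<Rightarrow> 'a) \<Rightarrow> ('k \<Rightarrow> 'm::ab_group_add \<Rightarrow> 'm) \<Rightarrow> (int \<Rightarrow> 'a set) \<Rightarrow>
   (int \<Rightarrow> 'm set) \<Rightarrow> ('a \<Rightarrow> 'm \<Rightarrow> 'm) \<Rightarrow> bool" where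
  "graded_module scA scM Ad Md act \<longleftrightarrow>
     graded_vs scM Md \<and>
     (\<forall>a b x. act (a + b) x = act a x + act b x) \<and>
     (\<forall>a x y. act a (x + y) = act a x + act a y) \<and>
     (\<forall>t a x. act (scA t a) x = scM t (act a x) \<and> act a (scM t x) = scM t (act a x)) \<and>
     (\<forall>x. act 1 x = x) \<and>
     (\<forall>a b x. act (a * b) x = act a (act b x)) \<and>
     (\<forall>i n a x. a \<in> Ad i \<longrightarrow> x \<in> Md n \<longrightarrow> act a x \<in> Md (i + n))"

text \<open>Unstable module, for a graded module given by components N, degree-wise zero z and
  homogeneous action actN k n : A^k \<times> N^n \<rightarrow> N^{k+n}:
  \<alpha>(F_{n+1}A \<otimes> N^n) = 0.\<close>

definition unstable :: "(int \<Rightarrow> int \<Rightarrow> 'a set) \<Rightarrow> (int \<Rightarrow> 'n set) \<Rightarrow> (int \<Rightarrow> 'n) \<Rightarrow>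
    (int \<Rightarrow> int \<Rightarrow> 'a \<Rightarrow> 'n \<Rightarrow> 'n) \<Rightarrow> bool" where
  "unstable F N z actN \<longleftrightarrow> (\<forall>n k a x. a \<in> F (n + 1) k \<longrightarrow> x \<in> N n \<longrightarrow> actN k n a x = z (k + n))"

text \<open>Desuspension \<Sigma>^{-1}: (\<Sigma>^{-1}N)^d = N^{d+1}.  (Any sign convention for the action
  does not affect unstability; we use none.)\<close>

definition desusp_sp :: "(int \<Rightarrow> 'n set) \<Rightarrow> int \<Rightarrow> 'n set" where
  "desusp_sp N d = N (d + 1)"

definition desusp_zero :: "(int \<Rightarrow> 'n) \<Rightarrow> int \<Rightarrow> 'n" where
  "desusp_zero z d = z (d + 1)"

definition desusp_act :: "(int \<Rightarrow> int \<Rightarrow> 'a \<Rightarrow> 'n \<Rightarrow> 'n) \<Rightarrow> int \<Rightarrow> int \<Rightarrow> 'a \<Rightarrow> 'n \<Rightarrow> 'n" where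
  "desusp_act actN k d a x = actN k (d + 1) a x"

section \<open>The module \<Phi>M and the map \<lambda>_M\<close>

text \<open>We fix, for i \<ge> 0 and \<epsilon> \<in> {0,1}, a representative u i \<epsilon> \<in> (F_{2i+\<epsilon>}A)^{2i(p-1)+\<epsilon>} of a
  basis vector of the one-dimensional space E_{2i+\<epsilon>}^{2i(p-1)+\<epsilon>}A, and identify
  E_{2i+\<epsilon>}^{2i(p-1)+\<epsilon>}A \<otimes> M^{2i+\<epsilon>} with M^{2i+\<epsilon>} via [u i \<epsilon>] \<otimes> x \<leftrightarrow> x.\<close>

definition gen_family :: "nat \<Rightarrow> (int \<Rightarrow> int \<Rightarrow> 'a set) \<Rightarrow> (int \<Rightarrow> int \<Rightarrow> 'a) \<Rightarrow> bool" where
  "gen_family p F u \<longleftrightarrow> (\<forall>i \<epsilon>::int. 0 \<le> i \<longrightarrow> \<epsilon> \<in> {0, 1} \<longrightarrow>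
      u i \<epsilon> \<in> F (2 * i + \<epsilon>) (gdeg p i \<epsilon>) \<and> u i \<epsilon> \<notin> F (2 * i + \<epsilon> + 1) (gdeg p i \<epsilon>))"

text \<open>Degree d = 2ip + 2\<epsilon> (i \<ge> 0, \<epsilon> \<in> {0,1}) is valid; then i = d div 2p, \<epsilon> = (d mod 2p) div 2.\<close>

definition phi_valid :: "nat \<Rightarrow> int \<Rightarrow> bool" where
  "phi_valid p d \<longleftrightarrow> 0 \<le> d \<and> d mod (2 * int p) \<in> {0, 2}"

definition phi_i :: "nat \<Rightarrow> int \<Rightarrow> int" where
  "phi_i p d = d div (2 * int p)"

definition phi_e :: "nat \<Rightarrow> int \<Rightarrow> int" where
  "phi_e p d = (d mod (2 * int p)) div 2"

definition PhiM :: "nat \<Rightarrow> (int \<Rightarrow> 'm::zero set) \<Rightarrow> int \<Rightarrow> 'm set" where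
  "PhiM p Md d = (if phi_valid p d then Md (2 * phi_i p d + phi_e p d) else {0})"

definition lam :: "nat \<Rightarrow> (int \<Rightarrow> int \<Rightarrow> 'a) \<Rightarrow> ('a \<Rightarrow> 'm::zero \<Rightarrow> 'm) \<Rightarrow> int \<Rightarrow> 'm \<Rightarrow> 'm" where
  "lam p u act d x = (if phi_valid p d then act (u (phi_i p d) (phi_e p d)) x else 0)"

text \<open>For a \<in> A^k and [u i \<epsilon>]\<otimes>x of degree d = 2ip+2\<epsilon>:
  \<gamma>(a \<otimes> [u i \<epsilon>]) = [u (i+j) \<epsilon>'] \<otimes> [b] where a\<cdot>u i \<epsilon> \<equiv> u (i+j) \<epsilon>' \<cdot> b mod F_{2i+\<epsilon>+1}, and the
  result is [u (i+j) \<epsilon>'] \<otimes> b x.\<close>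

definition phi_act :: "nat \<Rightarrow> (int \<Rightarrow> 'a::ring set) \<Rightarrow> (int \<Rightarrow> int \<Rightarrow> 'a set) \<Rightarrow> (int \<Rightarrow> int \<Rightarrow> 'a) \<Rightarrow>
    ('a \<Rightarrow> 'm::zero \<Rightarrow> 'm) \<Rightarrow> int \<Rightarrow> int \<Rightarrow> 'a \<Rightarrow> 'm \<Rightarrow> 'm" where
  "phi_act p Ad F u act k d a x =
     (let i = phi_i p d; \<epsilon> = phi_e p d; D = k + gdeg p i \<epsilon>; P = 2 * int p in
      if \<not> phi_valid p d then 0
      else if 0 \<le> k \<and> k mod P = 0 then
        (let j = k div P in
         act (SOME b. b \<in> Ad (2 * j) \<and> a * u i \<epsilon> - u (i + j) \<epsilon> * b \<in> F (2 * i + \<epsilon> + 1) D) x)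
      else if \<epsilon> = 0 \<and> 2 \<le> k \<and> (k - 2) mod P = 0 then
        (let j = (k - 2) div P in
         act (SOME b. b \<in> Ad (2 * j + 1) \<and> a * u i 0 - u (i + j) 1 * b \<in> F (2 * i + 1) D) x)
      else if \<epsilon> = 1 \<and> P \<le> k + 2 \<and> (k + 2) mod P = 0 then
        (let j = (k + 2) div P in
         act (SOME b. b \<in> Ad (2 * j - 1) \<and> a * u i 1 - u (i + j) 0 * b \<in> F (2 * i + 2) D) x)
      else 0)"

definition KerLam :: "nat \<Rightarrow> (int \<Rightarrow> int \<Rightarrow> 'a) \<Rightarrow> ('a \<Rightarrow> 'm::zero \<Rightarrow> 'm) \<Rightarrow> (int \<Rightarrow> 'm set) \<Rightarrow> int \<Rightarrow> 'm set" where
  "KerLam p u act Md d = {y \<in> PhiM p Md d. lam p u act d y = 0}"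

definition ImLam :: "nat \<Rightarrow> (int \<Rightarrow> int \<Rightarrow> 'a) \<Rightarrow> ('a \<Rightarrow> 'm::zero \<Rightarrow> 'm) \<Rightarrow> (int \<Rightarrow> 'm set) \<Rightarrow> int \<Rightarrow> 'm set" where
  "ImLam p u act Md d = lam p u act d ` PhiM p Md d"

text \<open>Cokernel: elements of degree d are the cosets x + Im^d (x \<in> M^d).\<close>

definition coset :: "'m::ab_group_add set \<Rightarrow> 'm \<Rightarrow> 'm set" where
  "coset S x = (\<lambda>y. x + y) ` S"

definition CokerLam :: "nat \<Rightarrow> (int \<Rightarrow> int \<Rightarrow> 'a) \<Rightarrow> ('a \<Rightarrow> 'm::ab_group_add \<Rightarrow> 'm) \<Rightarrow> (int \<Rightarrow> 'm set) \<Rightarrow> int \<Rightarrow> 'm set set" where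
  "CokerLam p u act Md d = coset (ImLam p u act Md d) ` Md d"

definition coker_zero :: "nat \<Rightarrow> (int \<Rightarrow> int \<Rightarrow> 'a) \<Rightarrow> ('a \<Rightarrow> 'm::ab_group_add \<Rightarrow> 'm) \<Rightarrow> (int \<Rightarrow> 'm set) \<Rightarrow> int \<Rightarrow> 'm set" where
  "coker_zero p u act Md d = ImLam p u act Md d"

definition coker_act :: "nat \<Rightarrow> (int \<Rightarrow> int \<Rightarrow> 'a) \<Rightarrow> ('a \<Rightarrow> 'm::ab_group_add \<Rightarrow> 'm) \<Rightarrow> (int \<Rightarrow> 'm set) \<Rightarrow>
    int \<Rightarrow> int \<Rightarrow> 'a \<Rightarrow> 'm set \<Rightarrow> 'm set" where
  "coker_act p u act Md k d a C =
     coset (ImLam p u act Md (k + d)) (act a (SOME x. x \<in> Md d \<and> C = coset (ImLam p u act Md d) x))"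

end

theory Submission
  imports Defs
begin

lemma additive_diff:
  fixes f :: "'x::ab_group_add \<Rightarrow> 'y::ab_group_add"
  assumes "\<And>x y. f (x + y) = f x + f y"
  shows "f (x - y) = f x - f y" and "f 0 = 0"
proof -
  have "f ((x - y) + y) = f (x - y) + f y" by (rule assms)
  then show "f (x - y) = f x - f y" by (simp add: algebra_simps)
  have "f (0 + 0) = f 0 + f 0" by (rule assms)
  then show "f 0 = 0" by simp
qed

lemma fga_facts:
  assumes "filtered_graded_algebra sc Ad F"
  shows "module.subspace sc (F i j)" "module sc" "module.subspace sc (Ad j)"
    "F i j \<subseteq> Ad j" "a \<in> Ad i \<Longrightarrow> b \<in> Ad j \<Longrightarrow> a * b \<in> Ad (i + j)"
  using assms unfolding filtered_graded_algebra_def graded_vs_def module_iff_vector_space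
  by auto

lemma sub_diff: "filtered_graded_algebra sc Ad F \<Longrightarrow> x \<in> F i j \<Longrightarrow> y \<in> F i j \<Longrightarrow> x - y \<in> F i j"
  using fga_facts(1,2) module.subspace_diff by metis
lemma sub_zero: "filtered_graded_algebra sc Ad F \<Longrightarrow> 0 \<in> F i j"
  using fga_facts(1,2) module.subspace_0 by metis
lemma subA_diff: "filtered_graded_algebra sc Ad F \<Longrightarrow> x \<in> Ad j \<Longrightarrow> y \<in> Ad j \<Longrightarrow> x - y \<in> Ad j"
  using fga_facts(3,2) module.subspace_diff by metis
lemma subA_zero: "filtered_graded_algebra sc Ad F \<Longrightarrow> 0 \<in> Ad j"
  using fga_facts(3,2) module.subspace_0 by metis

lemma mod_facts:
  assumes "graded_module scK scM Ad Md act"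
  shows "act a (x - y) = act a x - act a y" "act (a - b) x = act a x - act b x"
    "act a 0 = 0" "act (a * b) x = act a (act b x)"
    "a \<in> Ad i \<Longrightarrow> x \<in> Md n \<Longrightarrow> act a x \<in> Md (i + n)"
    "x \<in> Md n \<Longrightarrow> y \<in> Md n \<Longrightarrow> x - y \<in> Md n" "0 \<in> Md n"
proof -
  have add1: "\<And>x y. act a (x + y) = act a x + act a y" and add2: "\<And>a b. act (a + b) x = act a x + act b x"
    using assms unfolding graded_module_def by auto
  show "act a (x - y) = act a x - act a y" "act a 0 = 0" using additive_diff[OF add1] by auto
  show "act (a - b) x = act a x - act b x" using additive_diff[of "\<lambda>a. act a x", OF add2] by auto
  show "act (a * b) x = act a (act b x)" "a \<in> Ad i \<Longrightarrow> x \<in> Md n \<Longrightarrow> act a x \<in> Md (i + n)"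
    using assms unfolding graded_module_def by auto
  have "module.subspace scM (Md n)" "module scM" using assms
    unfolding graded_module_def graded_vs_def module_iff_vector_space by auto
  then show "x \<in> Md n \<Longrightarrow> y \<in> Md n \<Longrightarrow> x - y \<in> Md n" "0 \<in> Md n"
    using module.subspace_diff module.subspace_0 by metis+
qed

lemma arith_J:
  fixes p :: int and n k I E i1 e1 :: int
  assumes "p \<ge> 2" "n = 2*i1 + e1" "e1 \<in> {0,1}" "k \<ge> 2*i1*(p-1)+e1"
    "n + k = 2*p*I + 2*E" "E \<in> {0,1}"
  shows "2*I + E \<ge> n"
proof -
  have "p*(I - i1) \<ge> e1 - E"
    using assms by (simp add: algebra_simps)
  hence "I - i1 \<ge> 0"
  proof (rule contrapos_pp)
    assume "\<not> I - i1 \<ge> 0"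
    hence "I - i1 \<le> -1" by simp
    hence "p*(I - i1) \<le> p*(-1)" using assms(1) by (intro mult_left_mono) auto
    thus "\<not> p*(I - i1) \<ge> e1 - E" using assms by auto
  qed
  show ?thesis
  proof (cases "I = i1")
    case True thus ?thesis using assms by (auto simp: algebra_simps)
  next
    case False thus ?thesis using \<open>I - i1 \<ge> 0\<close> assms by auto
  qed
qed

lemma factor:
  assumes alg: "filtered_graded_algebra sc Ad F" and e6: "E6 p F" and e8: "E8 p Ad F"
    and gen: "gen_family p F u" and p2: "p \<ge> 2"
    and n0: "n \<ge> 0" and aF: "a \<in> F n k" and cong: "(n + k) mod (2*int p) \<in> {0,2}"
  shows "\<exists>c. c \<in> Ad (2*((n+k) div (2*int p)) + ((n+k) mod (2*int p)) div 2 - n) \<and>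
     a - u ((n+k) div (2*int p)) (((n+k) mod (2*int p)) div 2) * c \<in> F (n+1) k"
proof (cases "a \<in> F (n+1) k")
  case True
  then show ?thesis using subA_zero[OF alg] by (intro exI[of _ 0]) auto
next
  case False
  define P where "P = 2 * int p"
  define d where "d = n + k"
  define I where "I = d div P"
  define E where "E = (d mod P) div 2"
  define J where "J = 2*I + E - n"
  define i1 where "i1 = n div 2"
  define e1 where "e1 = n mod 2"
  have n_eq: "n = 2*i1 + e1" unfolding i1_def e1_def by simp
  have e1: "e1 \<in> {0,1}" unfolding e1_def by auto
  have "\<not> (k < 2 * i1 * (int p - 1) + e1 \<or> (2 * i1 + e1 + k) mod (2 * int p) \<notin> {0, 2})"
  proof
    assume "k < 2 * i1 * (int p - 1) + e1 \<or> (2 * i1 + e1 + k) mod (2 * int p) \<notin> {0, 2}"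
    then have "F (2 * i1 + e1) k \<subseteq> F (2 * i1 + e1 + 1) k"
      using e6 e1 unfolding E6_def by blast
    then show False using aF False n_eq by auto
  qed
  then have kge: "k \<ge> 2 * i1 * (int p - 1) + e1" by simp
  have i10: "i1 \<ge> 0" using n0 unfolding i1_def by simp
  have "2 * i1 * (int p - 1) \<ge> 0" using i10 p2 by simp
  hence k0: "k \<ge> 0" using kge e1 by auto
  have dm: "d mod P \<in> {0,2}" using cong unfolding d_def P_def .
  have E01: "E \<in> {0,1}" and dmE: "d mod P = 2*E" using dm unfolding E_def by auto
  have Ppos: "P > 0" using p2 unfolding P_def by simp
  have d_eq: "d = P*I + d mod P" unfolding I_def by simp
  have d2: "n + k = 2*int p*I + 2*E" using d_eq dmE unfolding d_def P_def by simp
  have "2*I + E \<ge> n"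
    using arith_J[of "int p" n i1 e1 k I E] p2 n_eq e1 kge d2 E01 by auto
  hence J0: "J \<ge> 0" unfolding J_def by simp
  have "d \<ge> 0" using n0 k0 unfolding d_def by simp
  hence I0: "I \<ge> 0" unfolding I_def using Ppos by (simp add: pos_imp_zdiv_nonneg_iff)
  have ug: "u I E \<in> F (2 * I + E) (gdeg p I E)" "u I E \<notin> F (2 * I + E + 1) (gdeg p I E)"
    using gen I0 E01 unfolding gen_family_def by auto
  have nI: "2 * I - J + E = n" unfolding J_def by simp
  have kI: "gdeg p I E + J = k" unfolding J_def gdeg_def using d2 by (simp add: algebra_simps)
  have "\<forall>c \<in> F (2 * I - J + E) (gdeg p I E + J).
           \<exists>b \<in> Ad J. c - u I E * b \<in> F (2 * I - J + E + 1) (gdeg p I E + J)"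
    using e8 I0 J0 E01 ug unfolding E8_def by blast
  then obtain b where "b \<in> Ad J" "a - u I E * b \<in> F (n + 1) k"
    using aF unfolding nI kI by blast
  then show ?thesis unfolding J_def I_def E_def d_def P_def by blast
qed

lemma e6_cong:
  assumes e6: "E6 p F" and p2: "p \<ge> 2"
    and n0: "n \<ge> 0" and aF: "a \<in> F n k" and nF: "a \<notin> F (n+1) k"
  shows "k \<ge> 0 \<and> (n + k) mod (2*int p) \<in> {0,2}"
proof -
  define i1 where "i1 = n div 2"
  define e1 where "e1 = n mod 2"
  have n_eq: "n = 2*i1 + e1" unfolding i1_def e1_def by simp
  have e1: "e1 \<in> {0,1}" unfolding e1_def by auto
  have "\<not> (k < 2 * i1 * (int p - 1) + e1 \<or> (2 * i1 + e1 + k) mod (2 * int p) \<notin> {0, 2})"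
  proof
    assume "k < 2 * i1 * (int p - 1) + e1 \<or> (2 * i1 + e1 + k) mod (2 * int p) \<notin> {0, 2}"
    then have "F (2 * i1 + e1) k \<subseteq> F (2 * i1 + e1 + 1) k"
      using e6 e1 unfolding E6_def by blast
    then show False using aF nF n_eq by auto
  qed
  then have kge: "k \<ge> 2 * i1 * (int p - 1) + e1" and c: "(n + k) mod (2*int p) \<in> {0,2}"
    using n_eq by auto
  have i10: "i1 \<ge> 0" using n0 unfolding i1_def by simp
  have "2 * i1 * (int p - 1) \<ge> 0" using i10 p2 by simp
  hence k0: "k \<ge> 0" using kge e1 by auto
  then show ?thesis using c by simp
qed

lemma im_zero:
  assumes modM: "graded_module scK scM Ad Md act"
  shows "0 \<in> ImLam p u act Md d"
proof -
  have "0 \<in> PhiM p Md d" unfolding PhiM_def using mod_facts(7)[OF modM] by auto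
  moreover have "lam p u act d 0 = 0" unfolding lam_def using mod_facts(3)[OF modM] by auto
  ultimately show ?thesis unfolding ImLam_def by force
qed

lemma im_diff:
  assumes modM: "graded_module scK scM Ad Md act"
    and "x \<in> ImLam p u act Md d" "y \<in> ImLam p u act Md d"
  shows "x - y \<in> ImLam p u act Md d"
proof -
  obtain x' y' where xy: "x' \<in> PhiM p Md d" "y' \<in> PhiM p Md d" "x = lam p u act d x'" "y = lam p u act d y'"
    using assms unfolding ImLam_def by auto
  have "x' - y' \<in> PhiM p Md d" using xy mod_facts(6)[OF modM] unfolding PhiM_def by (auto split: if_splits)
  moreover have "lam p u act d (x' - y') = x - y" using xy mod_facts(1)[OF modM] unfolding lam_def by auto
  ultimately show ?thesis unfolding ImLam_def by force
qed

lemma coset_self: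
  fixes S :: "'m::ab_group_add set"
  assumes "0 \<in> S" "\<And>x y. x \<in> S \<Longrightarrow> y \<in> S \<Longrightarrow> x - y \<in> S" "y \<in> S"
  shows "coset S y = S"
proof
  show "coset S y \<subseteq> S"
  proof
    fix z assume "z \<in> coset S y"
    then obtain s where s: "s \<in> S" "z = y + s" unfolding coset_def by auto
    have "0 - s \<in> S" using assms(1) assms(2)[of 0 s] s by blast
    hence "y - (0 - s) \<in> S" using assms(2,3) by blast
    thus "z \<in> S" using s by simp
  qed
  show "S \<subseteq> coset S y"
  proof
    fix z assume "z \<in> S"
    hence "z - y \<in> S" using assms by auto
    moreover have "z = y + (z - y)" by simp
    ultimately show "z \<in> coset S y" unfolding coset_def by blast
  qed
qed

lemma neg_deg_zero:
  assumes alg: "filtered_graded_algebra sc Ad F" and e1: "E1 Ad F"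
    and modM: "graded_module sc scM Ad Md act"
    and unstM: "unstable F Md (\<lambda>_. 0) (\<lambda>k n. act)"
    and x: "x \<in> Md m" and m: "m < 0"
  shows "x = 0"
proof -
  have "1 \<in> Ad 0" using alg unfolding filtered_graded_algebra_def by auto
  hence "1 \<in> F (m+1) 0" using e1 m unfolding E1_def by auto
  hence "act 1 x = 0" using unstM x unfolding unstable_def by auto
  moreover have "act 1 x = x" using modM unfolding graded_module_def by auto
  ultimately show ?thesis by simp
qed

lemma imlem:
  assumes alg: "filtered_graded_algebra sc Ad F" and e1: "E1 Ad F" and e6: "E6 p F" and e8: "E8 p Ad F"
    and gen: "gen_family p F u" and p2: "p \<ge> 2"
    and modM: "graded_module sc scM Ad Md act"
    and unstM: "unstable F Md (\<lambda>_. 0) (\<lambda>k n. act)"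
    and aF: "a \<in> F m k" and x: "x \<in> Md m"
  shows "act a x \<in> ImLam p u act Md (k + m)"
proof (cases "m < 0 \<or> a \<in> F (m+1) k")
  case True
  then have "act a x = 0"
  proof
    assume "m < 0" then have "x = 0" using neg_deg_zero[OF alg e1 modM unstM x] by simp
    then show ?thesis using mod_facts(3)[OF modM] by simp
  next
    assume "a \<in> F (m+1) k" then show ?thesis using unstM x unfolding unstable_def by auto
  qed
  then show ?thesis using im_zero[OF modM] by simp
next
  case False
  hence m0: "m \<ge> 0" and nF: "a \<notin> F (m+1) k" by auto
  have kc: "k \<ge> 0" "(m + k) mod (2*int p) \<in> {0,2}" using e6_cong[OF e6 p2 m0 aF nF] by auto
  define I where "I = (m+k) div (2*int p)"
  define E where "E = ((m+k) mod (2*int p)) div 2"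
  obtain c where c: "c \<in> Ad (2*I + E - m)" "a - u I E * c \<in> F (m+1) k"
    using factor[OF alg e6 e8 gen p2 m0 aF kc(2)] unfolding I_def E_def by blast
  have "act (a - u I E * c) x = 0" using unstM x c(2) unfolding unstable_def by auto
  hence ax: "act a x = act (u I E) (act c x)"
    using mod_facts(2,4)[OF modM] by (metis eq_iff_diff_eq_0)
  have cx: "act c x \<in> Md (2*I + E)" using mod_facts(5)[OF modM c(1) x] by simp
  have valid: "phi_valid p (k + m)" using kc m0 unfolding phi_valid_def by (simp add: add.commute)
  have "phi_i p (k+m) = I" "phi_e p (k+m) = E" unfolding phi_i_def phi_e_def I_def E_def
    by (simp_all add: add.commute)
  hence "act c x \<in> PhiM p Md (k+m)" "lam p u act (k+m) (act c x) = act a x"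
    using valid cx ax unfolding PhiM_def lam_def by auto
  then show ?thesis unfolding ImLam_def by force
qed

lemma kerlem:
  assumes alg: "filtered_graded_algebra sc Ad F" and e4: "E4 Ad F" and e3: "E3 Ad F"
    and e6: "E6 p F" and e8: "E8 p Ad F"
    and gen: "gen_family p F u" and p2: "p \<ge> 2"
    and modM: "graded_module sc scM Ad Md act"
    and unstM: "unstable F Md (\<lambda>_. 0) (\<lambda>k n. act)"
    and i0: "i \<ge> 0" and e: "\<epsilon> \<in> {0,1}" and m: "m = 2*int p*i + 2*\<epsilon>"
    and I0: "I \<ge> 0" and E: "E \<in> {0,1}" and jj: "jj \<ge> 0" and IJ: "2*I + E - jj = 2*i + \<epsilon>"
    and mk: "m + k = 2*int p*I + 2*E"
    and aF: "a \<in> F m k" and y: "y \<in> Md (2*i+\<epsilon>)" and uy: "act (u i \<epsilon>) y = 0"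
  shows "(\<exists>b. b \<in> Ad jj \<and> a * u i \<epsilon> - u I E * b \<in> F (2*i+\<epsilon>+1) (k + gdeg p i \<epsilon>))
    \<and> (\<forall>b. b \<in> Ad jj \<and> a * u i \<epsilon> - u I E * b \<in> F (2*i+\<epsilon>+1) (k + gdeg p i \<epsilon>) \<longrightarrow> act b y = 0)"
proof -
  have m0: "m \<ge> 0" using m i0 e by auto
  have Pp: "2 * int p > 0" using p2 by simp
  have Em: "(m+k) mod (2*int p) = 2*E" using mk E p2 by auto
  have Id: "(m+k) div (2*int p) = I" using mk E p2 by auto
  have cong: "(m + k) mod (2*int p) \<in> {0,2}" using Em E by auto
  obtain c where c: "c \<in> Ad (2*I + E - m)" "a - u I E * c \<in> F (m+1) k"
    using factor[OF alg e6 e8 gen p2 m0 aF cong] unfolding Em Id by auto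
  have ug: "u i \<epsilon> \<in> F (2 * i + \<epsilon>) (gdeg p i \<epsilon>)"
    using gen i0 e unfolding gen_family_def by auto
  have uA: "u i \<epsilon> \<in> Ad (gdeg p i \<epsilon>)" using ug fga_facts(4)[OF alg] by auto
  have ugI: "u I E \<in> F (2 * I + E) (gdeg p I E)" "u I E \<notin> F (2 * I + E + 1) (gdeg p I E)"
    using gen I0 E unfolding gen_family_def by auto
  define w where "w = c * u i \<epsilon>"
  have deg1: "2*I + E - m + gdeg p i \<epsilon> = jj" using m mk IJ unfolding gdeg_def by (simp add: algebra_simps)
  have wA: "w \<in> Ad jj" using fga_facts(5)[OF alg c(1) uA] deg1 unfolding w_def by simp
  have deg2: "m + 1 - gdeg p i \<epsilon> = 2*i+\<epsilon>+1" using m unfolding gdeg_def by (simp add: algebra_simps)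
  have "(a - u I E * c) * u i \<epsilon> \<in> F (m + 1 - gdeg p i \<epsilon>) (k + gdeg p i \<epsilon>)"
    using e4 c(2) uA unfolding E4_def by blast
  moreover have "(a - u I E * c) * u i \<epsilon> = a * u i \<epsilon> - u I E * w"
    unfolding w_def by (simp add: algebra_simps)
  ultimately have wF: "a * u i \<epsilon> - u I E * w \<in> F (2*i+\<epsilon>+1) (k + gdeg p i \<epsilon>)" using deg2 by simp
  have deg3: "gdeg p I E + jj = k + gdeg p i \<epsilon>" using m mk IJ unfolding gdeg_def by (simp add: algebra_simps)
  have deg4: "2 * I - jj + E + 1 = 2*i+\<epsilon>+1" using IJ by simp
  have inj: "\<forall>b \<in> Ad jj. u I E * b \<in> F (2 * I - jj + E + 1) (gdeg p I E + jj) \<longrightarrow> b \<in> F (2 * I - jj + E + 1) jj"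
    using e8 I0 jj E ugI unfolding E8_def by blast
  have "act b y = 0" if b: "b \<in> Ad jj" "a * u i \<epsilon> - u I E * b \<in> F (2*i+\<epsilon>+1) (k + gdeg p i \<epsilon>)" for b
  proof -
    have "(a * u i \<epsilon> - u I E * w) - (a * u i \<epsilon> - u I E * b) \<in> F (2*i+\<epsilon>+1) (k + gdeg p i \<epsilon>)"
      using sub_diff[OF alg wF b(2)] .
    moreover have "(a * u i \<epsilon> - u I E * w) - (a * u i \<epsilon> - u I E * b) = u I E * (b - w)"
      by (simp add: algebra_simps)
    ultimately have "u I E * (b - w) \<in> F (2 * I - jj + E + 1) (gdeg p I E + jj)"
      using deg3 deg4 by simp
    moreover have "b - w \<in> Ad jj" using subA_diff[OF alg b(1) wA] .
    ultimately have "b - w \<in> F (2*i+\<epsilon>+1) jj" using inj deg4 by auto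
    hence "act (b - w) y = 0" using unstM y unfolding unstable_def by auto
    moreover have "act w y = 0" unfolding w_def using mod_facts(3,4)[OF modM] uy by simp
    ultimately show ?thesis using mod_facts(2)[OF modM] by (metis diff_zero eq_iff_diff_eq_0)
  qed
  then show ?thesis using wA wF by blast
qed

lemma some_zero: "(\<exists>b. Q b) \<and> (\<forall>b. Q b \<longrightarrow> act b y = 0) \<Longrightarrow> act (SOME b. Q b) y = 0"
  by (metis someI_ex)

lemma kerpart:
  assumes alg: "filtered_graded_algebra sc Ad F" and e4: "E4 Ad F" and e3: "E3 Ad F"
    and e6: "E6 p F" and e8: "E8 p Ad F"
    and gen: "gen_family p F u" and p2: "p \<ge> 2"
    and modM: "graded_module sc scM Ad Md act"
    and unstM: "unstable F Md (\<lambda>_. 0) (\<lambda>k n. act)"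
    and aF: "a \<in> F m k" and y: "y \<in> KerLam p u act Md m"
  shows "phi_act p Ad F u act k m a y = 0"
proof (cases "phi_valid p m")
  case False then show ?thesis unfolding phi_act_def Let_def by simp
next
  case True
  define P where "P = 2 * int p"
  define i where "i = phi_i p m"
  define \<epsilon> where "\<epsilon> = phi_e p m"
  have Pp: "P > 0" using p2 unfolding P_def by simp
  have mm: "m mod P \<in> {0,2}" "m \<ge> 0" using True unfolding phi_valid_def P_def by auto
  have e: "\<epsilon> \<in> {0,1}" and me: "m mod P = 2*\<epsilon>" using mm unfolding \<epsilon>_def phi_e_def P_def by auto
  have i0: "i \<ge> 0" using mm Pp unfolding i_def phi_i_def P_def by (simp add: pos_imp_zdiv_nonneg_iff)
  have m: "m = 2*int p*i + 2*\<epsilon>" using me unfolding i_def phi_i_def P_def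
    by (metis div_mult_mod_eq mult.commute)
  have yM: "y \<in> Md (2*i+\<epsilon>)" and uy: "act (u i \<epsilon>) y = 0"
    using y True unfolding KerLam_def PhiM_def lam_def i_def \<epsilon>_def by auto
  note K = kerlem[OF alg e4 e3 e6 e8 gen p2 modM unstM i0 e m _ _ _ _ _ aF yM uy]
  have pa: "phi_act p Ad F u act k m a y =
      (if 0 \<le> k \<and> k mod P = 0 then
         act (SOME b. b \<in> Ad (2 * (k div P)) \<and> a * u i \<epsilon> - u (i + k div P) \<epsilon> * b \<in> F (2 * i + \<epsilon> + 1) (k + gdeg p i \<epsilon>)) y
      else if \<epsilon> = 0 \<and> 2 \<le> k \<and> (k - 2) mod P = 0 then
         act (SOME b. b \<in> Ad (2 * ((k-2) div P) + 1) \<and> a * u i 0 - u (i + (k-2) div P) 1 * b \<in> F (2 * i + 1) (k + gdeg p i \<epsilon>)) y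
      else if \<epsilon> = 1 \<and> P \<le> k + 2 \<and> (k + 2) mod P = 0 then
         act (SOME b. b \<in> Ad (2 * ((k+2) div P) - 1) \<and> a * u i 1 - u (i + (k+2) div P) 0 * b \<in> F (2 * i + 2) (k + gdeg p i \<epsilon>)) y
      else 0)"
    unfolding phi_act_def Let_def i_def \<epsilon>_def P_def using True by simp
  show ?thesis
  proof (cases "0 \<le> k \<and> k mod P = 0")
    case c1: True
    define j where "j = k div P"
    have j0: "j \<ge> 0" using c1 Pp unfolding j_def by (simp add: pos_imp_zdiv_nonneg_iff)
    have kj: "k = P * j" using div_mult_mod_eq[of k P] c1 unfolding j_def by (simp add: mult.commute)
    have "act (SOME b. b \<in> Ad (2 * j) \<and> a * u i \<epsilon> - u (i + j) \<epsilon> * b \<in> F (2 * i + \<epsilon> + 1) (k + gdeg p i \<epsilon>)) y = 0"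
      apply (rule some_zero[where act=act and y=y])
      apply (rule K)
      using i0 j0 e apply simp_all
      using m kj unfolding P_def by (simp add: algebra_simps)
    then show ?thesis using pa c1 unfolding j_def by simp
  next
    case nc1: False
    show ?thesis
    proof (cases "\<epsilon> = 0 \<and> 2 \<le> k \<and> (k - 2) mod P = 0")
      case c2: True
      define j where "j = (k-2) div P"
      have j0: "j \<ge> 0" using c2 Pp unfolding j_def by (simp add: pos_imp_zdiv_nonneg_iff)
      have kj: "k - 2 = P * j" using div_mult_mod_eq[of "k-2" P] c2 unfolding j_def by (simp add: mult.commute)
      have "act (SOME b. b \<in> Ad (2 * j + 1) \<and> a * u i \<epsilon> - u (i + j) 1 * b \<in> F (2 * i + \<epsilon> + 1) (k + gdeg p i \<epsilon>)) y = 0"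
        apply (rule some_zero[where act=act and y=y])
        apply (rule K)
        using i0 j0 c2 apply simp_all
        using m kj c2 unfolding P_def by (simp add: algebra_simps)
      then show ?thesis using pa nc1 c2 unfolding j_def by simp
    next
      case nc2: False
      show ?thesis
      proof (cases "\<epsilon> = 1 \<and> P \<le> k + 2 \<and> (k + 2) mod P = 0")
        case c3: True
        define j where "j = (k+2) div P"
        have kj: "k + 2 = P * j" using div_mult_mod_eq[of "k+2" P] c3 unfolding j_def by (simp add: mult.commute)
        have "P * 1 \<le> P * j" using c3 kj by simp
        hence j1: "j \<ge> 1" using Pp by (simp add: mult_le_cancel_left)
        have X: "act (SOME b. b \<in> Ad (2 * j - 1) \<and> a * u i \<epsilon> - u (i + j) 0 * b \<in> F (2 * i + \<epsilon> + 1) (k + gdeg p i \<epsilon>)) y = 0"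
          apply (rule some_zero[where act=act and y=y])
          apply (rule K)
          using i0 j1 c3 apply simp_all
          using m kj c3 unfolding P_def by (simp add: algebra_simps)
        have e1: "\<epsilon> = 1" using c3 by simp
        have f: "2 * i + \<epsilon> + 1 = 2 * i + 2" using e1 by simp
        have X': "act (SOME b. b \<in> Ad (2 * ((k+2) div P) - 1) \<and> a * u i 1 - u (i + (k+2) div P) 0 * b \<in> F (2 * i + 2) (k + gdeg p i \<epsilon>)) y = 0"
          using X unfolding f j_def by (simp only: e1)
        have "phi_act p Ad F u act k m a y = act (SOME b. b \<in> Ad (2 * ((k+2) div P) - 1) \<and> a * u i 1 - u (i + (k+2) div P) 0 * b \<in> F (2 * i + 2) (k + gdeg p i \<epsilon>)) y"
          by (simp only: pa if_P[OF c3] if_not_P[OF nc1] if_not_P[OF nc2])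
        then show ?thesis using X' by simp
      next
        case nc3: False
        show ?thesis by (simp only: pa if_not_P[OF nc3] if_not_P[OF nc1] if_not_P[OF nc2])
      qed
    qed
  qed
qed

theorem lemma3p8:
  fixes scK :: "'k::field \<Rightarrow> 'a::ring_1 \<Rightarrow> 'a"
    and scM :: "'k \<Rightarrow> 'm::ab_group_add \<Rightarrow> 'm"
    and p :: nat
    and Ad :: "int \<Rightarrow> 'a set"
    and F :: "int \<Rightarrow> int \<Rightarrow> 'a set"
    and Md :: "int \<Rightarrow> 'm set"
    and act :: "'a \<Rightarrow> 'm \<Rightarrow> 'm"
    and u :: "int \<Rightarrow> int \<Rightarrow> 'a"
  assumes char: "prime p" "of_nat p = (0::'k)"
    and alg: "filtered_graded_algebra scK Ad F"
    and "E1 Ad F" and "E2 F" and "E3 Ad F" and "E4 Ad F"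
    and "E6 p F" and "E7 scK p F" and "E8 p Ad F"
    and modM: "graded_module scK scM Ad Md act"
    and unstM: "unstable F Md (\<lambda>_. 0) (\<lambda>k n. act)"
    and gen: "gen_family p F u"
  shows "unstable F (desusp_sp (CokerLam p u act Md)) (desusp_zero (coker_zero p u act Md))
           (desusp_act (coker_act p u act Md)) \<and>
         (E9 p Ad F \<longrightarrow>
         unstable F (desusp_sp (KerLam p u act Md)) (\<lambda>_. 0)
           (desusp_act (phi_act p Ad F u act)))"
proof
  have p2: "p \<ge> 2" using char(1) prime_ge_2_nat by blast
  note e1 = \<open>E1 Ad F\<close> and e3 = \<open>E3 Ad F\<close> and e4 = \<open>E4 Ad F\<close> and e6 = \<open>E6 p F\<close> and e8 = \<open>E8 p Ad F\<close>
  show "unstable F (desusp_sp (CokerLam p u act Md)) (desusp_zero (coker_zero p u act Md))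
           (desusp_act (coker_act p u act Md))"
    unfolding unstable_def
  proof (intro allI impI)
    fix n k a C
    assume aF: "a \<in> F (n + 1) k" and C: "C \<in> desusp_sp (CokerLam p u act Md) n"
    then obtain x0 where "x0 \<in> Md (n+1)" "C = coset (ImLam p u act Md (n+1)) x0"
      unfolding desusp_sp_def CokerLam_def by auto
    then have ex: "\<exists>x. x \<in> Md (n+1) \<and> C = coset (ImLam p u act Md (n+1)) x" by blast
    define x where "x = (SOME x. x \<in> Md (n+1) \<and> C = coset (ImLam p u act Md (n+1)) x)"
    have xM: "x \<in> Md (n+1)" using someI_ex[OF ex] unfolding x_def by blast
    have ax: "act a x \<in> ImLam p u act Md (k + (n+1))"
      by (rule imlem[OF alg e1 e6 e8 gen p2 modM unstM aF xM])
    have "coset (ImLam p u act Md (k + (n+1))) (act a x) = ImLam p u act Md (k + (n+1))"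
      by (rule coset_self[OF im_zero[OF modM] im_diff[OF modM] ax])
    then show "desusp_act (coker_act p u act Md) k n a C = desusp_zero (coker_zero p u act Md) (k + n)"
      unfolding desusp_act_def desusp_zero_def coker_act_def coker_zero_def x_def[symmetric]
      by (simp add: add.assoc)
  qed
  show "E9 p Ad F \<longrightarrow> unstable F (desusp_sp (KerLam p u act Md)) (\<lambda>_. 0)
           (desusp_act (phi_act p Ad F u act))"
    unfolding unstable_def desusp_sp_def desusp_act_def
    using kerpart[OF alg e4 e3 e6 e8 gen p2 modM unstM] by blast
qed

end
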